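(* Let $G$ be a compact connected Lie group with $n$-dimensional Lie algebra $\mathfrak g$, $\langle\cdot,\cdot\rangle$ an $\mathrm{Ad}_G$-invariant scalar product on $\mathfrak g$, $\mathbb I:\mathfrak g\to\mathfrak g$ symmetric positive definite, and $\epsilon$ a real parameter. Let $E_1,\dots,E_n$ be an orthonormal basis of $\mathfrak g$ and $\mathcal O_{E_i}$ the adjoint orbit of $E_i$. Fix $1\le k<n$. On $$\mathcal M=\{(\omega,e_1,\dots,e_n)\in\mathfrak g\times\mathcal O_{E_1}\times\cdots\times\mathcal O_{E_n}:\ \langle e_i,e_j\rangle=\delta_{ij}\}$$ consider the system $$\dot m=[m,\omega]+\sum_{i=1}^k\lambda^ie_i,\quad m=\mathbb I\omega,\qquad \dot e_i=\epsilon[e_i,\omega],\ i=1,\dots,n,$$ with $\lambda^i=-\sum_{j=1}^k\langle e_j,\mathbb I^{-1}[m,\omega]\rangle\mathbb A^{ij}$, where $(\mathbb A^{ij})$ is the inverse of $\mathbb A_{ij}=\langle e_i,\mathbb I^{-1}e_j\rangle$, $i,j=1,\dots,k$. Let $\mathcal H=\mathrm{span}\{e_1,\dots,e_k\}$, $\mathcal D=\mathrm{span}\{e_{k+1},\dots,e_n\}$, let $\mathrm{pr}_{\mathcal H},\mathrm{pr}_{\mathcal D}$ be the orthogonal projections onto them, and define the momentum $\mathbf m=\mathrm{pr}_{\mathcal D}\mathbb I\omega+\mathrm{pr}_{\mathcal H}\omega=\mathbf J\omega$, $\mathbf J=\mathrm{pr}_{\mathcal D}\mathbb I+\mathrm{pr}_{\mathcal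 H}$. Then along trajectories, $\omega=\mathbf J^{-1}\mathbf m$ and $(\mathbf m,e_{k+1},\dots,e_n)$ satisfies the closed system on $$\mathcal N=\{(\mathbf m,e_{k+1},\dots,e_n)\in\mathfrak g\times\mathcal O_{E_{k+1}}\times\cdots\times\mathcal O_{E_n}:\ \langle e_i,e_j\rangle=\delta_{ij}\}$$ given by $$\dot{\mathbf m}=\epsilon[\mathbf m,\omega]+(1-\epsilon)\,\mathrm{pr}_{\mathcal D}[\mathbb I\omega,\omega],\qquad \dot e_i=\epsilon[e_i,\omega],\quad i=k+1,\dots,n.$$
   Context: Here $\mathrm{pr}_{\mathcal H}=\mathbb E-\mathrm{pr}_{\mathcal D}$ where $\mathbb E$ is the identity, so both projections depend only on $e_{k+1},\dots,e_n$, and $\mathbf J$ is invertible. *)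

theory Defs
  imports "HOL-Analysis.Analysis"
begin

definition inv_lie_algebra :: "('g::euclidean_space \<Rightarrow> 'g \<Rightarrow> 'g) \<Rightarrow> bool" where
  "inv_lie_algebra br \<longleftrightarrow>
     bilinear br \<and>
     (\<forall>x y. br x y = - br y x) \<and>
     (\<forall>x y z. br x (br y z) + br y (br z x) + br z (br x y) = 0) \<and>
     (\<forall>x y z. inner (br x y) z = inner x (br y z))"

definition exp_ad :: "('g::euclidean_space \<Rightarrow> 'g \<Rightarrow> 'g) \<Rightarrow> 'g \<Rightarrow> 'g \<Rightarrow> 'g" where
  "exp_ad br X Y = (\<Sum>j. (1 / fact j) *\<^sub>R ((br X) ^^ j) Y)"

text \<open>Adjoint orbit of E under the connected group: Ad(G) is generated by the
exp(ad X), X in the Lie algebra.\<close>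
definition adj_orbit :: "('g::euclidean_space \<Rightarrow> 'g \<Rightarrow> 'g) \<Rightarrow> 'g \<Rightarrow> 'g set" where
  "adj_orbit br E = {foldr (exp_ad br) Xs E | Xs. True}"

definition orth_proj :: "'g::euclidean_space set \<Rightarrow> 'g \<Rightarrow> 'g" where
  "orth_proj S x = (THE y. y \<in> S \<and> (\<forall>z\<in>S. inner (x - y) z = 0))"

definition mat_inv_k :: "nat \<Rightarrow> (nat \<Rightarrow> nat \<Rightarrow> real) \<Rightarrow> (nat \<Rightarrow> nat \<Rightarrow> real)" where
  "mat_inv_k k A = (THE B. (\<forall>i\<in>{1..k}. \<forall>j\<in>{1..k}.
        (\<Sum>l=1..k. A i l * B l j) = (if i = j then 1 else 0)) \<and>
      (\<forall>i j. \<not> (i \<in> {1..k} \<and> j \<in> {1..k}) \<longrightarrow> B i j = 0))"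

end

theory Submission
  imports Defs
begin

definition onorm :: "(nat \<Rightarrow> 'g::euclidean_space) \<Rightarrow> nat set \<Rightarrow> bool" where
  "onorm f S \<longleftrightarrow> (\<forall>i\<in>S. \<forall>j\<in>S. inner (f i) (f j) = (if i = j then 1 else 0))"

lemma onorm_subset: "onorm f S \<Longrightarrow> S' \<subseteq> S \<Longrightarrow> onorm f S'"
  unfolding onorm_def by blast

lemma inner_on_sum:
  assumes "onorm f S" "finite S" "A \<subseteq> S" "j \<in> S"
  shows "inner (\<Sum>i\<in>A. c i *\<^sub>R f i) (f j) = (if j \<in> A then c j else 0)"
proof -
  have fA: "finite A" using assms finite_subset by blast
  have "inner (\<Sum>i\<in>A. c i *\<^sub>R f i) (f j) = (\<Sum>i\<in>A. c i * (if i = j then 1 else 0))"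
    unfolding inner_sum_left inner_scaleR_left
    by (rule sum.cong) (use assms in \<open>auto simp: onorm_def\<close>)
  also have "\<dots> = (if j \<in> A then c j else 0)"
    using fA by (simp add: sum.delta' if_distrib[of "\<lambda>x. c _ * x"] cong: if_cong)
  finally show ?thesis .
qed

lemma inner_on_sum':
  assumes "onorm f S" "finite S" "A \<subseteq> S" "j \<in> S"
  shows "inner (f j) (\<Sum>i\<in>A. c i *\<^sub>R f i) = (if j \<in> A then c j else 0)"
  using inner_on_sum[OF assms] by (simp add: inner_commute)

lemma onb_expand:
  fixes f :: "nat \<Rightarrow> 'g::euclidean_space"
  assumes on: "onorm f {1..DIM('g)}"
  shows "x = (\<Sum>i=1..DIM('g). inner x (f i) *\<^sub>R f i)"
proof -
  let ?n = "DIM('g)"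
  let ?S = "f ` {1..?n}"
  have inj: "inj_on f {1..?n}"
    using on unfolding onorm_def inj_on_def by (metis one_neq_zero)
  have pw: "pairwise orthogonal ?S"
    using on unfolding onorm_def pairwise_def orthogonal_def by auto
  have nz: "0 \<notin> ?S"
    using on unfolding onorm_def by (metis (no_types, lifting) imageE inner_zero_left zero_neq_one)
  have ind: "independent ?S" by (rule pairwise_orthogonal_independent[OF pw nz])
  have card: "card ?S = ?n" using card_image[OF inj] by simp
  have sp: "UNIV \<subseteq> span ?S"
    by (rule card_ge_dim_independent) (use ind card in auto)
  define d where "d = x - (\<Sum>i=1..?n. inner x (f i) *\<^sub>R f i)"
  have "orthogonal d y" if "y \<in> ?S" for y
  proof -
    from that obtain j where j: "j \<in> {1..?n}" "y = f j" by auto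
    have "inner (\<Sum>i=1..?n. inner x (f i) *\<^sub>R f i) (f j) = inner x (f j)"
      using inner_on_sum[OF on _ _ j(1), of "{1..?n}" "\<lambda>i. inner x (f i)"] j by simp
    then show ?thesis unfolding d_def orthogonal_def j(2) by (simp add: inner_diff_left)
  qed
  hence "orthogonal d d" using orthogonal_to_span sp by blast
  hence "d = 0" by (simp add: orthogonal_def)
  thus ?thesis unfolding d_def by simp
qed

lemma orth_proj_sum:
  fixes f :: "nat \<Rightarrow> 'g::euclidean_space"
  assumes on: "onorm f S" and fin: "finite S"
  shows "orth_proj (span (f ` S)) x = (\<Sum>i\<in>S. inner x (f i) *\<^sub>R f i)"
proof -
  let ?y = "(\<Sum>i\<in>S. inner x (f i) *\<^sub>R f i)"
  have orth: "inner (x - ?y) z = 0" if "z \<in> span (f ` S)" for z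
  proof -
    have "orthogonal (x - ?y) w" if "w \<in> f ` S" for w
    proof -
      from that obtain j where j: "j \<in> S" "w = f j" by auto
      show ?thesis using inner_on_sum[OF on fin order_refl j(1), of "\<lambda>i. inner x (f i)"] j
        by (simp add: orthogonal_def inner_diff_left)
    qed
    thus ?thesis using orthogonal_to_span[OF that] by (simp add: orthogonal_def)
  qed
  have yin: "?y \<in> span (f ` S)"
    by (intro span_sum span_scale span_base) auto
  show ?thesis unfolding orth_proj_def
  proof (rule the_equality)
    show "?y \<in> span (f ` S) \<and> (\<forall>z\<in>span (f ` S). inner (x - ?y) z = 0)" using yin orth by blast
  next
    fix y assume y: "y \<in> span (f ` S) \<and> (\<forall>z\<in>span (f ` S). inner (x - y) z = 0)"
    have dsp: "y - ?y \<in> span (f ` S)" using y yin span_diff by blast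
    have "inner (x - y) (y - ?y) = 0" using y dsp by blast
    moreover have "inner (x - ?y) (y - ?y) = 0" using orth dsp by blast
    ultimately have "inner (y - ?y) (y - ?y) = 0"
      by (simp add: inner_diff_left inner_diff_right algebra_simps)
    thus "y = ?y" by simp
  qed
qed

lemma sum_split_k:
  fixes k n :: nat
  assumes "k \<le> n" shows "(\<Sum>i=1..n. g i) = (\<Sum>i=1..k. g i) + (\<Sum>i=k+1..n. g i)"
proof -
  have "{1..n} = {1..k} \<union> {k+1..n}" using assms by (auto; linarith)
  moreover have "{1..k} \<inter> {k+1..n} = {}" by auto
  ultimately show ?thesis by (simp add: sum.union_disjoint)
qed


lemma mat_inv_k_prop:
  fixes f :: "nat \<Rightarrow> 'g::euclidean_space" and L :: "'g \<Rightarrow> 'g" and k :: nat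
  assumes L: "linear L" and pos: "\<forall>v. v \<noteq> 0 \<longrightarrow> inner v (L v) > 0" and on: "onorm f {1..k}"
  shows "\<forall>i\<in>{1..k}. \<forall>j\<in>{1..k}. (\<Sum>l=1..k. inner (f i) (L (f l)) *
            mat_inv_k k (\<lambda>a b. inner (f a) (L (f b))) l j) = (if i = j then 1 else 0)"
proof -
  define A where "A = (\<lambda>a b. inner (f a) (L (f b)))"
  define Q where "Q = (\<lambda>x. \<Sum>l=1..k. inner x (f l) *\<^sub>R f l)"
  have Lsum: "inner (f i) (L (\<Sum>l=1..k. c l *\<^sub>R f l)) = (\<Sum>l=1..k. A i l * c l)" for i c
    unfolding A_def using L
    by (simp add: linear_sum linear_scale inner_sum_right mult.commute)
  have Qi: "inner (Q y) (f i) = inner y (f i)" if "i \<in> {1..k}" for y i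
    unfolding Q_def using inner_on_sum[OF on _ order_refl that, of "\<lambda>l. inner y (f l)"] that by simp
  have key: "\<forall>l\<in>{1..k}. x l = 0" if hx: "\<forall>i\<in>{1..k}. (\<Sum>l=1..k. A i l * x l) = 0" for x
  proof -
    define v where "v = (\<Sum>l=1..k. x l *\<^sub>R f l)"
    have z: "inner (f i) (L v) = 0" if "i \<in> {1..k}" for i
      unfolding v_def Lsum using hx that by blast
    have gen: "inner (\<Sum>l=1..k. c l *\<^sub>R f l) y = (\<Sum>l=1..k. c l * inner (f l) y)" for c y
      by (simp add: inner_sum_left)
    have "inner v (L v) = (\<Sum>l=1..k. x l * inner (f l) (L v))"
      unfolding v_def by (rule gen)
    also have "\<dots> = 0" using z by simp
    finally have "inner v (L v) = 0" .
    hence v0: "v = 0" using pos by (metis less_irrefl)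
    show ?thesis
    proof
      fix l assume l: "l \<in> {1..k}"
      have "inner v (f l) = x l" unfolding v_def using inner_on_sum[OF on _ order_refl l, of x] l by simp
      thus "x l = 0" using v0 by simp
    qed
  qed
  define P where "P = (\<lambda>B. (\<forall>i\<in>{1..k}. \<forall>j\<in>{1..k}.
        (\<Sum>l=1..k. A i l * B l j) = (if i = j then 1 else (0::real))) \<and>
      (\<forall>i j. \<not> (i \<in> {1..k} \<and> j \<in> {1..k}) \<longrightarrow> B i j = 0))"
  have uniq: "B = B'" if "P B" "P B'" for B B'
  proof (intro ext)
    fix a b
    show "B a b = B' a b"
    proof (cases "a \<in> {1..k} \<and> b \<in> {1..k}")
      case True
      have "\<forall>i\<in>{1..k}. (\<Sum>l=1..k. A i l * (B l b - B' l b)) = 0"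
        using that True unfolding P_def by (simp add: right_diff_distrib sum_subtractf)
      from key[OF this] True show ?thesis by simp
    next
      case False thus ?thesis using that unfolding P_def by simp
    qed
  qed
  define \<Phi> where "\<Phi> = (\<lambda>x. Q (L (Q x)) + (x - Q x))"
  have linQ: "linear Q" unfolding Q_def linear_iff
    by (simp add: inner_add_left scaleR_add_left sum.distrib scaleR_sum_right)
  have linPhi: "linear \<Phi>" unfolding \<Phi>_def
    by (intro linear_compose_add linear_compose_sub linear_id[unfolded id_def]
        linear_compose[OF linear_compose[OF linQ L] linQ, unfolded o_def] linQ)
  have Phii: "inner (\<Phi> x) (f i) = inner (L (Q x)) (f i)" if "i \<in> {1..k}" for x i
    unfolding \<Phi>_def using Qi[OF that] by (simp add: inner_diff_left inner_add_left)
  have "inj \<Phi>"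
  proof (rule linear_injective_0[OF linPhi, THEN iffD2], intro allI impI)
    fix x assume h: "\<Phi> x = 0"
    have z: "inner (f i) (L (Q x)) = 0" if "i \<in> {1..k}" for i
      using Phii[OF that, of x] h by (simp add: inner_commute)
    have gen: "inner (\<Sum>l=1..k. c l *\<^sub>R f l) y = (\<Sum>l=1..k. c l * inner (f l) y)" for c y
      by (simp add: inner_sum_left)
    have "inner (Q x) (L (Q x)) = (\<Sum>l=1..k. inner x (f l) * inner (f l) (L (Q x)))"
      by (subst (1) Q_def) (rule gen)
    also have "\<dots> = 0" using z by simp
    finally have "inner (Q x) (L (Q x)) = 0" .
    hence "Q x = 0" using pos by (metis less_irrefl)
    moreover have "L 0 = 0" using L linear_0 by blast
    moreover have "Q 0 = 0" unfolding Q_def by simp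
    ultimately show "x = 0" using h unfolding \<Phi>_def by simp
  qed
  hence "surj \<Phi>" using linear_injective_imp_surjective[OF linPhi] by blast
  define xs where "xs = (\<lambda>j. inv \<Phi> (f j))"
  have xs: "\<Phi> (xs j) = f j" for j unfolding xs_def by (rule surj_f_inv_f[OF \<open>surj \<Phi>\<close>])
  define B where "B = (\<lambda>l j. if l \<in> {1..k} \<and> j \<in> {1..k} then inner (xs j) (f l) else 0)"
  have "P B" unfolding P_def
  proof (intro conjI ballI allI impI)
    fix i j assume i: "i \<in> {1..k}" and j: "j \<in> {1..k}"
    have "(\<Sum>l=1..k. A i l * B l j) = (\<Sum>l=1..k. A i l * inner (xs j) (f l))"
      by (rule sum.cong) (use j in \<open>auto simp: B_def\<close>)
    also have "\<dots> = inner (f i) (L (Q (xs j)))" unfolding Q_def Lsum ..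
    also have "\<dots> = inner (\<Phi> (xs j)) (f i)" using Phii[OF i, of "xs j"] by (metis inner_commute)
    also have "\<dots> = (if i = j then 1 else 0)" using xs on i j unfolding onorm_def
      by (simp add: inner_commute)
    finally show "(\<Sum>l=1..k. A i l * B l j) = (if i = j then 1 else 0)" .
  next
    fix i j assume "\<not> (i \<in> {1..k} \<and> j \<in> {1..k})" thus "B i j = 0" unfolding B_def by auto
  qed
  hence "\<exists>!B. P B" using uniq by blast
  hence "P (mat_inv_k k A)" unfolding mat_inv_k_def P_def[symmetric] by (rule theI')
  thus ?thesis unfolding P_def A_def by blast
qed

lemma term_deriv:
  fixes a b :: "real \<Rightarrow> 'g::euclidean_space"
  assumes "(a has_vector_derivative a') (at t)" "(b has_vector_derivative b') (at t)"
  shows "((\<lambda>s. inner (a s) (b s) *\<^sub>R b s) has_vector_derivative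
           ((inner (a t) b' + inner a' (b t)) *\<^sub>R b t + inner (a t) (b t) *\<^sub>R b')) (at t)"
proof -
  have i: "((\<lambda>s. inner (a s) (b s)) has_vector_derivative (inner (a t) b' + inner a' (b t))) (at t)"
    using bounded_bilinear.has_vector_derivative[OF bounded_bilinear_inner assms] .
  show ?thesis
    using bounded_bilinear.has_vector_derivative[OF bounded_bilinear_scaleR i assms(2)]
    by (simp add: add.commute)
qed

theorem proposition2:
  fixes br :: "'g::euclidean_space \<Rightarrow> 'g \<Rightarrow> 'g"
    and II :: "'g \<Rightarrow> 'g"
    and \<epsilon> :: real
    and E :: "nat \<Rightarrow> 'g"
    and k :: nat
    and T :: "real set"
    and \<omega> :: "real \<Rightarrow> 'g"
    and e :: "nat \<Rightarrow> real \<Rightarrow> 'g"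
  assumes lie: "inv_lie_algebra br"
    and II_lin: "linear II"
    and II_sym: "\<forall>x y. inner (II x) y = inner x (II y)"
    and II_pos: "\<forall>x. x \<noteq> 0 \<longrightarrow> inner (II x) x > 0"
    and E_on: "\<forall>i\<in>{1..DIM('g)}. \<forall>j\<in>{1..DIM('g)}.
                  inner (E i) (E j) = (if i = j then 1 else 0)"
    and k: "1 \<le> k" "k < DIM('g)"
    and T: "open T"
    and in_M: "\<forall>t\<in>T. (\<forall>i\<in>{1..DIM('g)}. e i t \<in> adj_orbit br (E i)) \<and>
                 (\<forall>i\<in>{1..DIM('g)}. \<forall>j\<in>{1..DIM('g)}.
                    inner (e i t) (e j t) = (if i = j then 1 else 0))"
    and m_eq: "\<forall>t\<in>T. ((\<lambda>s. II (\<omega> s)) has_vector_derivative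
                 (br (II (\<omega> t)) (\<omega> t) +
                  (\<Sum>i=1..k. (- (\<Sum>j=1..k.
                      inner (e j t) (inv II (br (II (\<omega> t)) (\<omega> t))) *
                      mat_inv_k k (\<lambda>a b. inner (e a t) (inv II (e b t))) i j)) *\<^sub>R e i t)))
                 (at t)"
    and e_eq: "\<forall>t\<in>T. \<forall>i\<in>{1..DIM('g)}.
                 (e i has_vector_derivative (\<epsilon> *\<^sub>R br (e i t) (\<omega> t))) (at t)"
  shows "\<forall>t\<in>T.
     (let prD = orth_proj (span ((\<lambda>i. e i t) ` {k+1..DIM('g)}));
          prH = (\<lambda>x. x - prD x);
          J = (\<lambda>x. prD (II x) + prH x)
      in bij J \<and> \<omega> t = inv J (J (\<omega> t))) \<and>
     ((\<lambda>s. let prD = orth_proj (span ((\<lambda>i. e i s) ` {k+1..DIM('g)}))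
            in prD (II (\<omega> s)) + (\<omega> s - prD (\<omega> s)))
        has_vector_derivative
        (let prD = orth_proj (span ((\<lambda>i. e i t) ` {k+1..DIM('g)}));
             mb = prD (II (\<omega> t)) + (\<omega> t - prD (\<omega> t))
         in \<epsilon> *\<^sub>R br mb (\<omega> t) + (1 - \<epsilon>) *\<^sub>R prD (br (II (\<omega> t)) (\<omega> t)))) (at t) \<and>
     (\<forall>i\<in>{k+1..DIM('g)}. (e i has_vector_derivative (\<epsilon> *\<^sub>R br (e i t) (\<omega> t))) (at t)) \<and>
     (\<forall>i\<in>{k+1..DIM('g)}. e i t \<in> adj_orbit br (E i)) \<and>
     (\<forall>i\<in>{k+1..DIM('g)}. \<forall>j\<in>{k+1..DIM('g)}.
        inner (e i t) (e j t) = (if i = j then 1 else 0))"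
proof (intro ballI)
  fix t assume tT: "t \<in> T"
  define n where "n = DIM('g)"
  have kn: "k \<le> n" using k unfolding n_def by simp
  have sub1: "{k+1..n} \<subseteq> {1..n}" "{1..k} \<subseteq> {1..n}" using k kn by auto
  have bil: "bilinear br" and anti: "\<And>x y. br x y = - br y x"
    and inv: "\<And>x y z. inner (br x y) z = inner x (br y z)"
    using lie unfolding inv_lie_algebra_def by blast+
  have linL: "linear (\<lambda>x. br x y)" for y using bil unfolding bilinear_def by blast
  have brxx: "br x x = 0" for x
  proof -
    have "br x x + br x x = 0" using anti[of x x] by (metis add.right_inverse)
    hence "2 *\<^sub>R br x x = 0" by (simp add: scaleR_2)
    thus ?thesis by simp
  qed
  have injII: "inj II"
  proof (rule linear_injective_0[OF II_lin, THEN iffD2], intro allI impI)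
    fix x assume "II x = 0" thus "x = 0" using II_pos by force
  qed
  have surjII: "surj II" using linear_injective_imp_surjective[OF II_lin injII] by blast
  have IIinv: "II (inv II y) = y" for y by (rule surj_f_inv_f[OF surjII])
  have invII: "inv II (II y) = y" for y by (rule inv_f_f[OF injII])
  have blII: "bounded_linear (inv II)"
    using inj_linear_imp_inv_bounded_linear[of II] II_lin injII linear_linear by blast
  have linInv: "linear (inv II)" using blII linear_linear by blast
  have posInv: "\<forall>v. v \<noteq> 0 \<longrightarrow> inner v (inv II v) > 0"
  proof (intro allI impI)
    fix v :: 'g assume v: "v \<noteq> 0"
    hence "inv II v \<noteq> 0" using IIinv[of v] linear_0[OF II_lin] by metis
    hence "inner (II (inv II v)) (inv II v) > 0" using II_pos by blast
    thus "inner v (inv II v) > 0" using IIinv by simp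
  qed
  have onS: "onorm (\<lambda>i. e i s) {1..n}" if "s \<in> T" for s
    using in_M that unfolding onorm_def n_def by blast
  have prD_eq: "orth_proj (span ((\<lambda>i. e i s) ` {k+1..n})) = (\<lambda>x. \<Sum>i=k+1..n. inner x (e i s) *\<^sub>R e i s)"
    if "s \<in> T" for s
    using orth_proj_sum[OF onorm_subset[OF onS[OF that] sub1(1)]] by auto
  have prH_eq: "x - (\<Sum>i=k+1..n. inner x (e i s) *\<^sub>R e i s) = (\<Sum>i=1..k. inner x (e i s) *\<^sub>R e i s)"
    if "s \<in> T" for s x
    using onb_expand[OF onS[OF that, unfolded n_def], of x] sum_split_k[OF kn, of "\<lambda>i. inner x (e i s) *\<^sub>R e i s"]
    unfolding n_def by (simp add: algebra_simps)
  define f where "f = (\<lambda>i. e i t)"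
  have on: "onorm f {1..n}" unfolding f_def using onS[OF tT] .
  define P where "P = (\<lambda>x. \<Sum>i=k+1..n. inner x (f i) *\<^sub>R f i)"
  define Q where "Q = (\<lambda>x. \<Sum>i=1..k. inner x (f i) *\<^sub>R f i)"
  have Pi: "inner (P x) (f j) = (if j \<in> {k+1..n} then inner x (f j) else 0)" if "j \<in> {1..n}" for x j
    unfolding P_def by (rule inner_on_sum[OF on _ sub1(1) that]) simp
  have Qi: "inner (Q x) (f j) = (if j \<in> {1..k} then inner x (f j) else 0)" if "j \<in> {1..n}" for x j
    unfolding Q_def by (rule inner_on_sum[OF on _ sub1(2) that]) simp
  have Qeq: "x - P x = Q x" for x unfolding P_def Q_def f_def using prH_eq[OF tT] .
  have linP: "linear P" unfolding P_def linear_iff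
    by (simp add: inner_add_left scaleR_add_left sum.distrib scaleR_sum_right)
  have linQ: "linear Q" unfolding Q_def linear_iff
    by (simp add: inner_add_left scaleR_add_left sum.distrib scaleR_sum_right)
  define J where "J = (\<lambda>x. P (II x) + Q x)"
  have linJ: "linear J" unfolding J_def
    by (intro linear_compose_add linear_compose[OF II_lin linP, unfolded o_def] linQ)
  have injJ: "inj J"
  proof (rule linear_injective_0[OF linJ, THEN iffD2], intro allI impI)
    fix x assume h: "J x = 0"
    have a: "inner x (f j) = 0" if "j \<in> {1..k}" for j
    proof -
      have "j \<in> {1..n}" "j \<notin> {k+1..n}" using that kn by auto
      thus ?thesis using arg_cong[OF h, of "\<lambda>v. inner v (f j)"] Pi Qi that
        unfolding J_def by (simp add: inner_add_left)
    qed
    have b: "inner (II x) (f j) = 0" if "j \<in> {k+1..n}" for j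
    proof -
      have "j \<in> {1..n}" "j \<notin> {1..k}" using that kn by auto
      thus ?thesis using arg_cong[OF h, of "\<lambda>v. inner v (f j)"] Pi Qi that
        unfolding J_def by (simp add: inner_add_left)
    qed
    have Q0: "Q x = 0" unfolding Q_def using a by simp
    hence xP: "x = P x" using Qeq[of x] by simp
    have "inner (II x) x = (\<Sum>i=k+1..n. inner x (f i) * inner (II x) (f i))"
      by (subst xP, simp add: P_def inner_sum_right)
    also have "\<dots> = 0" using b by simp
    finally show "x = 0" using II_pos by (metis less_irrefl)
  qed
  have surjJ: "surj J" using linear_injective_imp_surjective[OF linJ injJ] by blast
  have part1: "bij J \<and> \<omega> t = inv J (J (\<omega> t))"
    using injJ surjJ by (simp add: bij_def inv_f_f)
  define m where "m = II (\<omega> t)"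
  define w where "w = \<omega> t"
  define A where "A = (\<lambda>a b. inner (f a) (inv II (f b)))"
  define B where "B = mat_inv_k k A"
  define c where "c = (\<lambda>j. inner (f j) (inv II (br m w)))"
  define lam where "lam = (\<lambda>i. - (\<Sum>j=1..k. c j * B i j))"
  define M where "M = br m w + (\<Sum>i=1..k. lam i *\<^sub>R f i)"
  define W where "W = inv II M"
  define e' where "e' = (\<lambda>i. \<epsilon> *\<^sub>R br (f i) w)"
  have dm: "((\<lambda>s. II (\<omega> s)) has_vector_derivative M) (at t)"
    using m_eq tT unfolding M_def lam_def c_def B_def A_def m_def w_def f_def by simp
  have dw: "(\<omega> has_vector_derivative W) (at t)"
    using bounded_linear.has_vector_derivative[OF blII dm] unfolding W_def invII .
  have de: "(e i has_vector_derivative e' i) (at t)" if "i \<in> {1..n}" for i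
    using e_eq tT that unfolding e'_def f_def n_def w_def by simp
  have AB: "\<forall>i\<in>{1..k}. \<forall>j\<in>{1..k}. (\<Sum>l=1..k. A i l * B l j) = (if i = j then 1 else 0)"
    unfolding A_def B_def by (rule mat_inv_k_prop[OF linInv posInv onorm_subset[OF on sub1(2)]])
  have c4: "inner W (f j) = 0" if j: "j \<in> {1..k}" for j
  proof -
    have "inner (f j) W = c j + (\<Sum>i=1..k. lam i * A j i)"
      unfolding W_def M_def c_def A_def
      by (simp add: linear_add[OF linInv] linear_sum[OF linInv] linear_scale[OF linInv]
          inner_add_right inner_sum_right)
    also have "(\<Sum>i=1..k. lam i * A j i) = - (\<Sum>i=1..k. \<Sum>l=1..k. c l * (A j i * B i l))"
      unfolding lam_def sum_negf[symmetric]
      by (rule sum.cong[OF refl]) (simp add: sum_distrib_left sum_distrib_right mult_ac)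
    also have "(\<Sum>i=1..k. \<Sum>l=1..k. c l * (A j i * B i l)) = (\<Sum>l=1..k. \<Sum>i=1..k. c l * (A j i * B i l))"
      by (rule sum.swap)
    also have "\<dots> = (\<Sum>l=1..k. c l * (if j = l then 1 else 0))"
      by (rule sum.cong[OF refl]) (use AB j in \<open>simp add: sum_distrib_left[symmetric]\<close>)
    also have "\<dots> = c j" using j by (simp add: if_distrib cong: if_cong)
    finally show ?thesis by (simp add: inner_commute)
  qed
  have c1b: "inner m (br (f i) w) = - inner (br m w) (f i)" for i
  proof -
    have "inner m (br (f i) w) = inner (br (f i) w) m" by (simp add: inner_commute)
    also have "\<dots> = inner (f i) (br w m)" by (rule inv)
    also have "\<dots> = - inner (br m w) (f i)" using anti[of w m] by (simp add: inner_commute)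
    finally show ?thesis .
  qed
  have c2: "inner w (br (f i) w) = 0" for i
  proof -
    have "inner w (br (f i) w) = inner (br (f i) w) w" by (simp add: inner_commute)
    also have "\<dots> = inner (f i) (br w w)" by (rule inv)
    finally show ?thesis by (simp add: brxx)
  qed
  have c3: "inner M (f i) = inner (br m w) (f i)" if "i \<in> {k+1..n}" for i
  proof -
    have "i \<in> {1..n}" "i \<notin> {1..k}" using that kn by auto
    thus ?thesis unfolding M_def
      using inner_on_sum[OF on _ sub1(2), of i lam] by (simp add: inner_add_left)
  qed
  define F where "F = (\<lambda>s. (\<Sum>i=k+1..n. inner (II (\<omega> s)) (e i s) *\<^sub>R e i s) +
                           (\<Sum>i=1..k. inner (\<omega> s) (e i s) *\<^sub>R e i s))"
  define Dv where "Dv = (\<Sum>i=k+1..n. (inner m (e' i) + inner M (f i)) *\<^sub>R f i + inner m (f i) *\<^sub>R e' i) +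
                       (\<Sum>i=1..k. (inner w (e' i) + inner W (f i)) *\<^sub>R f i + inner w (f i) *\<^sub>R e' i)"
  have dF: "(F has_vector_derivative Dv) (at t)"
    unfolding F_def Dv_def
  proof (intro has_vector_derivative_add has_vector_derivative_sum)
    fix i assume "i \<in> {k+1..n}"
    hence "i \<in> {1..n}" using sub1 by blast
    from term_deriv[OF dm de[OF this]]
    show "((\<lambda>s. inner (II (\<omega> s)) (e i s) *\<^sub>R e i s) has_vector_derivative
        (inner m (e' i) + inner M (f i)) *\<^sub>R f i + inner m (f i) *\<^sub>R e' i) (at t)"
      unfolding m_def f_def by (simp add: inner_commute)
  next
    fix i assume "i \<in> {1..k}"
    hence "i \<in> {1..n}" using sub1 by blast
    from term_deriv[OF dw de[OF this]]
    show "((\<lambda>s. inner (\<omega> s) (e i s) *\<^sub>R e i s) has_vector_derivative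
        (inner w (e' i) + inner W (f i)) *\<^sub>R f i + inner w (f i) *\<^sub>R e' i) (at t)"
      unfolding w_def f_def by (simp add: inner_commute)
  qed
  have Dv_eq: "Dv = \<epsilon> *\<^sub>R br (P m + Q w) w + (1 - \<epsilon>) *\<^sub>R P (br m w)"
  proof -
    have s1: "(\<Sum>i=k+1..n. (inner m (e' i) + inner M (f i)) *\<^sub>R f i + inner m (f i) *\<^sub>R e' i)
       = (\<Sum>i=k+1..n. ((1 - \<epsilon>) * inner (br m w) (f i)) *\<^sub>R f i + \<epsilon> *\<^sub>R (inner m (f i) *\<^sub>R br (f i) w))"
      by (rule sum.cong[OF refl]) (simp add: c1b c3 e'_def algebra_simps)
    have s2: "(\<Sum>i=1..k. (inner w (e' i) + inner W (f i)) *\<^sub>R f i + inner w (f i) *\<^sub>R e' i)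
       = (\<Sum>i=1..k. \<epsilon> *\<^sub>R (inner w (f i) *\<^sub>R br (f i) w))"
      by (rule sum.cong[OF refl]) (simp add: c2 c4 e'_def mult.commute)
    have br_lin: "br (P m + Q w) w = (\<Sum>i=k+1..n. inner m (f i) *\<^sub>R br (f i) w) + (\<Sum>i=1..k. inner w (f i) *\<^sub>R br (f i) w)"
      unfolding P_def Q_def
      by (simp add: linear_add[OF linL] linear_sum[OF linL] linear_scale[OF linL])
    show ?thesis unfolding Dv_def s1 s2 br_lin unfolding P_def
      by (simp only: sum.distrib scaleR_sum_right scaleR_add_right scaleR_scaleR) simp
  qed
  have part2: "((\<lambda>s. let prD = orth_proj (span ((\<lambda>i. e i s) ` {k+1..DIM('g)}))
            in prD (II (\<omega> s)) + (\<omega> s - prD (\<omega> s)))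
        has_vector_derivative
        (let prD = orth_proj (span ((\<lambda>i. e i t) ` {k+1..DIM('g)}));
             mb = prD (II (\<omega> t)) + (\<omega> t - prD (\<omega> t))
         in \<epsilon> *\<^sub>R br mb (\<omega> t) + (1 - \<epsilon>) *\<^sub>R prD (br (II (\<omega> t)) (\<omega> t)))) (at t)"
  proof -
    have val: "(let prD = orth_proj (span ((\<lambda>i. e i t) ` {k+1..DIM('g)}));
             mb = prD (II (\<omega> t)) + (\<omega> t - prD (\<omega> t))
         in \<epsilon> *\<^sub>R br mb (\<omega> t) + (1 - \<epsilon>) *\<^sub>R prD (br (II (\<omega> t)) (\<omega> t))) = Dv"
      unfolding Dv_eq n_def[symmetric] prD_eq[OF tT] Let_def Qeq[symmetric]
      unfolding P_def f_def m_def w_def ..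
    have funeq: "F s = (let prD = orth_proj (span ((\<lambda>i. e i s) ` {k+1..DIM('g)}))
            in prD (II (\<omega> s)) + (\<omega> s - prD (\<omega> s)))" if "s \<in> T" for s
      unfolding n_def[symmetric] prD_eq[OF that] Let_def prH_eq[OF that] F_def ..
    show ?thesis unfolding val
      by (rule has_vector_derivative_transform_within_open[OF dF T tT funeq])
  qed
  have p1: "let prD = orth_proj (span ((\<lambda>i. e i t) ` {k+1..DIM('g)}));
          prH = (\<lambda>x. x - prD x);
          J = (\<lambda>x. prD (II x) + prH x)
      in bij J \<and> \<omega> t = inv J (J (\<omega> t))"
  proof -
    have "(\<lambda>x. orth_proj (span ((\<lambda>i. e i t) ` {k+1..DIM('g)})) (II x) +
              (x - orth_proj (span ((\<lambda>i. e i t) ` {k+1..DIM('g)})) x)) = J"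
      unfolding n_def[symmetric] prD_eq[OF tT] J_def P_def Q_def f_def
      by (simp only: prH_eq[OF tT])
    hence eqp: "orth_proj (span ((\<lambda>i. e i t) ` {k+1..DIM('g)})) (II x) +
              (x - orth_proj (span ((\<lambda>i. e i t) ` {k+1..DIM('g)})) x) = J x" for x
      by (metis (no_types, lifting))
    show ?thesis using part1 unfolding Let_def by (simp only: eqp)
  qed
  have sub3: "i \<in> {1..DIM('g)}" if "i \<in> {k+1..DIM('g)}" for i using that k by auto
  show "(let prD = orth_proj (span ((\<lambda>i. e i t) ` {k+1..DIM('g)}));
          prH = (\<lambda>x. x - prD x);
          J = (\<lambda>x. prD (II x) + prH x)
      in bij J \<and> \<omega> t = inv J (J (\<omega> t))) \<and>
     ((\<lambda>s. let prD = orth_proj (span ((\<lambda>i. e i s) ` {k+1..DIM('g)}))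
            in prD (II (\<omega> s)) + (\<omega> s - prD (\<omega> s)))
        has_vector_derivative
        (let prD = orth_proj (span ((\<lambda>i. e i t) ` {k+1..DIM('g)}));
             mb = prD (II (\<omega> t)) + (\<omega> t - prD (\<omega> t))
         in \<epsilon> *\<^sub>R br mb (\<omega> t) + (1 - \<epsilon>) *\<^sub>R prD (br (II (\<omega> t)) (\<omega> t)))) (at t) \<and>
     (\<forall>i\<in>{k+1..DIM('g)}. (e i has_vector_derivative (\<epsilon> *\<^sub>R br (e i t) (\<omega> t))) (at t)) \<and>
     (\<forall>i\<in>{k+1..DIM('g)}. e i t \<in> adj_orbit br (E i)) \<and>
     (\<forall>i\<in>{k+1..DIM('g)}. \<forall>j\<in>{k+1..DIM('g)}.
        inner (e i t) (e j t) = (if i = j then 1 else 0))"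
    using p1 part2 e_eq in_M tT sub3 by blast
qed

end
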